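(* Let $\mu$ be the Cauchy distribution $d\mu(x)=\frac1\pi\frac{dx}{1+x^2}$ and $t>0$. Then \[\varphi_t(u)=\frac{4t}{\sqrt{u^2+1}\,\big(\sqrt{u^2+1}+\sqrt{u^2+1+4t}\big)},\qquad u\in\mathbb R.\]
   Context: $v_t(u)=\inf\{v>0:\int\frac{d\mu(x)}{(u-x)^2+v^2}\le\frac1t\}$; $H_{-t}(z)=z-t\int\frac{d\mu(x)}{z-x}$; $f_t(u_0)=\mathrm{Re}[H_{-t}(u_0+iv_t(u_0))]$, a strictly increasing homeomorphism of $\mathbb R$; $\varphi_t(u)=2v_t(f_t^{-1}(u))$. *)

theory Defs
  imports "HOL-Probability.Probability"
begin

definition cauchy_measure :: "real measure" where
  "cauchy_measure = density lborel (\<lambda>x. ennreal (1 / (pi * (1 + x\<^sup>2))))"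

definition v_t :: "real measure \<Rightarrow> real \<Rightarrow> real \<Rightarrow> real" where
  "v_t \<mu> t u = Inf {v. v > 0 \<and> (\<integral>x. 1 / ((u - x)\<^sup>2 + v\<^sup>2) \<partial>\<mu>) \<le> 1 / t}"

definition H_minus :: "real measure \<Rightarrow> real \<Rightarrow> complex \<Rightarrow> complex" where
  "H_minus \<mu> t z = z - of_real t * (\<integral>x. 1 / (z - of_real x) \<partial>\<mu>)"

definition f_t :: "real measure \<Rightarrow> real \<Rightarrow> real \<Rightarrow> real" where
  "f_t \<mu> t u0 = Re (H_minus \<mu> t (Complex u0 (v_t \<mu> t u0)))"

definition phi_t :: "real measure \<Rightarrow> real \<Rightarrow> real \<Rightarrow> real" where
  "phi_t \<mu> t u = 2 * v_t \<mu> t (inv (f_t \<mu> t) u)"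

end

theory Submission
  imports Defs "HOL-Real_Asymp.Real_Asymp"
begin


lemma antider_deriv:
  fixes a b e u v x :: real assumes v: "v > 0"
  shows "((\<lambda>x. a/2*ln(1+x^2) + b*arctan x - a/2*ln((x-u)^2+v^2) + (e / v) * arctan((x-u)/v))
     has_real_derivative ((a*x+b)/(1+x^2) + (e - a*(x-u))/((x-u)^2+v^2))) (at x)"
proof -
  have p1: "1 + x^2 > 0" by (simp add: add_pos_nonneg)
  have p2: "(x-u)^2+v^2 > 0" using v by (simp add: add_nonneg_pos)
  have d1: "((\<lambda>x. ln(1+x^2)) has_real_derivative (2*x/(1+x^2))) (at x)"
    using p1 by (auto intro!: derivative_eq_intros)
  have d2: "(arctan has_real_derivative (1/(1+x^2))) (at x)"
    by (auto intro!: derivative_eq_intros simp: divide_inverse)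
  have d3: "((\<lambda>x. ln((x-u)^2+v^2)) has_real_derivative (2*(x-u)/((x-u)^2+v^2))) (at x)"
    using p2 by (auto intro!: derivative_eq_intros)
  have "((\<lambda>x. arctan((x-u)/v)) has_real_derivative (inverse (1 + ((x-u)/v)^2) * (1/v))) (at x)"
    using v by (auto intro!: derivative_eq_intros)
  moreover have "inverse (1 + ((x-u)/v)^2) * (1/v) = v/((x-u)^2+v^2)"
    using v p2 by (simp add: field_simps power2_eq_square)
  ultimately have d4: "((\<lambda>x. arctan((x-u)/v)) has_real_derivative (v/((x-u)^2+v^2))) (at x)" by simp
  have dd: "((\<lambda>x. a/2*ln(1+x^2) + b*arctan x - a/2*ln((x-u)^2+v^2) + (e / v) * arctan((x-u)/v))
     has_real_derivative (a/2*(2*x/(1+x^2)) + b*(1/(1+x^2)) - a/2*(2*(x-u)/((x-u)^2+v^2)) + (e/v)*(v/((x-u)^2+v^2)))) (at x)"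
    by (intro DERIV_add DERIV_diff DERIV_cmult d1 d2 d3 d4)
  have gen: "a/2*(2*x/E) + b*(1/E) - a/2*(2*(x-u)/D) + (e/v)*(v/D)
     = (a*x+b)/E + (e - a*(x-u))/D" if "E \<noteq> 0" "D \<noteq> 0" for D E :: real
    using v that by (simp add: field_simps)
  have eq: "a/2*(2*x/(1+x^2)) + b*(1/(1+x^2)) - a/2*(2*(x-u)/((x-u)^2+v^2)) + (e/v)*(v/((x-u)^2+v^2))
     = (a*x+b)/(1+x^2) + (e - a*(x-u))/((x-u)^2+v^2)"
    using p1 p2 by (intro gen) auto
  show ?thesis by (rule DERIV_cong[OF dd eq])
qed

lemma F_top:
  fixes a b e u v :: real assumes v: "v > 0"
  shows "((\<lambda>x. a/2*ln(1+x^2) + b*arctan x - a/2*ln((x-u)^2+v^2) + (e / v) * arctan((x-u)/v)) \<longlongrightarrow> pi/2*(b+e/v)) at_top"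
  using v by (real_asymp simp: field_simps)

lemma F_bot:
  fixes a b e u v :: real assumes v: "v > 0"
  shows "((\<lambda>x. a/2*ln(1+x^2) + b*arctan x - a/2*ln((x-u)^2+v^2) + (e / v) * arctan((x-u)/v)) \<longlongrightarrow> -pi/2*(b+e/v)) at_bot"
  using v by (real_asymp simp: field_simps)

lemma cont_form:
  fixes a b e u v :: real assumes v: "v > 0"
  shows "isCont (\<lambda>x. (a*x+b)/(1+x^2) + (e - a*(x-u))/((x-u)^2+v^2)) x"
proof -
  have "\<And>x. 1 + x^2 \<noteq> (0::real)" by (metis add_pos_nonneg less_irrefl zero_le_power2 zero_less_one)
  moreover have "\<And>x. (x-u)^2+v^2 \<noteq> 0" using v by (metis add_nonneg_pos less_irrefl zero_le_power2 zero_less_power2)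
  ultimately show ?thesis by (intro continuous_intros) auto
qed

lemma LBINT_form_nonneg:
  fixes a b e u v :: real and p :: "real \<Rightarrow> real"
  assumes v: "v > 0" and p: "\<And>x. p x = (a*x+b)/(1+x^2) + (e - a*(x-u))/((x-u)^2+v^2)"
    and nn: "\<And>x. p x \<ge> 0"
  shows "set_integrable lborel (einterval (-\<infinity>) \<infinity>) p"
        "(LBINT x=-\<infinity>..\<infinity>. p x) = pi*(b+e/v)"
proof -
  define F where "F = (\<lambda>x. a/2*ln(1+x^2) + b*arctan x - a/2*ln((x-u)^2+v^2) + (e / v) * arctan((x-u)/v))"
  have D: "DERIV F x :> p x" for x unfolding F_def p by (rule antider_deriv[OF v])
  have C: "isCont p x" for x unfolding p[abs_def] by (rule cont_form[OF v])
  have A: "((F \<circ> real_of_ereal) \<longlongrightarrow> -pi/2*(b+e/v)) (at_right (-\<infinity>))"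
    unfolding ereal_tendsto_simps1 F_def by (rule F_bot[OF v])
  have B: "((F \<circ> real_of_ereal) \<longlongrightarrow> pi/2*(b+e/v)) (at_left \<infinity>)"
    unfolding ereal_tendsto_simps1 F_def by (rule F_top[OF v])
  have lt: "(-\<infinity>::ereal) < \<infinity>" by simp
  have ae: "AE x in lborel. -\<infinity> < ereal x \<longrightarrow> ereal x < \<infinity> \<longrightarrow> 0 \<le> p x" using nn by simp
  note * = interval_integral_FTC_nonneg[OF lt D C ae A B]
  show "set_integrable lborel (einterval (-\<infinity>) \<infinity>) p" by (rule *(1))
  show "(LBINT x=-\<infinity>..\<infinity>. p x) = pi*(b+e/v)" unfolding *(2) by (simp add: field_simps)
qed

lemma LBINT_form_int:
  fixes a b e u v :: real and p :: "real \<Rightarrow> real"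
  assumes v: "v > 0" and p: "\<And>x. p x = (a*x+b)/(1+x^2) + (e - a*(x-u))/((x-u)^2+v^2)"
    and int: "set_integrable lborel (einterval (-\<infinity>) \<infinity>) p"
  shows "(LBINT x=-\<infinity>..\<infinity>. p x) = pi*(b+e/v)"
proof -
  define F where "F = (\<lambda>x. a/2*ln(1+x^2) + b*arctan x - a/2*ln((x-u)^2+v^2) + (e / v) * arctan((x-u)/v))"
  have D: "(F has_vector_derivative p x) (at x)" for x unfolding F_def p
    using antider_deriv[OF v] by (simp add: has_real_derivative_iff_has_vector_derivative)
  have C: "isCont p x" for x unfolding p[abs_def] by (rule cont_form[OF v])
  have A: "((F \<circ> real_of_ereal) \<longlongrightarrow> -pi/2*(b+e/v)) (at_right (-\<infinity>))"
    unfolding ereal_tendsto_simps1 F_def by (rule F_bot[OF v])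
  have B: "((F \<circ> real_of_ereal) \<longlongrightarrow> pi/2*(b+e/v)) (at_left \<infinity>)"
    unfolding ereal_tendsto_simps1 F_def by (rule F_top[OF v])
  have lt: "(-\<infinity>::ereal) < \<infinity>" by simp
  note * = interval_integral_FTC_integrable[OF lt D C int A B]
  show ?thesis unfolding * by (simp add: field_simps)
qed

lemma LBINT_UNIV: "(LBINT x=-\<infinity>..\<infinity>. f x) = (\<integral>x. f x \<partial>lborel)"
  by (simp add: interval_lebesgue_integral_def set_lebesgue_integral_def)

lemma set_int_UNIV: "set_integrable lborel (einterval (-\<infinity>) \<infinity>) f \<longleftrightarrow> integrable lborel f"
  by (simp add: set_integrable_def)

lemma onepx2: "1 + x^2 > (0::real)" by (simp add: add_pos_nonneg)

lemma special_A: "(LBINT x=-\<infinity>..\<infinity>. 1/((1+x^2)*(1+x^2))) = pi/2"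
proof -
  define F where "F = (\<lambda>x::real. x/(2*(1+x^2)) + arctan x/2)"
  have D: "DERIV F x :> 1/((1+x^2)*(1+x^2))" for x
  proof -
    have nz: "2*(1+x^2) \<noteq> (0::real)" using onepx2[of x] by simp
    have d2: "DERIV (\<lambda>x::real. 2*(1+x^2)) x :> 2*(0 + of_nat 2 * x^(2 - Suc 0))"
      by (intro DERIV_cmult DERIV_add DERIV_const DERIV_pow DERIV_ident)
    have dF: "DERIV F x :> (1 * (2*(1+x^2)) - 2*(0 + of_nat 2 * x^(2 - Suc 0)) * x) / (2*(1+x^2))^Suc (Suc 0) + inverse (1+x^2) / 2"
      unfolding F_def by (intro DERIV_add DERIV_quotient[OF DERIV_ident d2 nz] DERIV_cdivide DERIV_arctan)
    have gen0: "\<And>E::real. E \<noteq> 0 \<Longrightarrow> (1 * (2*E) - 2*(0 + of_nat 2 * x^(2 - Suc 0)) * x) / (2*E)^Suc (Suc 0) + inverse E / 2 = (E - x^2)/(E*E)"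
      by (simp add: field_simps power2_eq_square)
    have gen: "\<And>E::real. E \<noteq> 0 \<Longrightarrow> E - x^2 = 1 \<Longrightarrow> (1 * (2*E) - 2*(0 + of_nat 2 * x^(2 - Suc 0)) * x) / (2*E)^Suc (Suc 0) + inverse E / 2 = 1/(E*E)"
      using gen0 by metis
    have eqF: "(1 * (2*(1+x^2)) - 2*(0 + of_nat 2 * x^(2 - Suc 0)) * x) / (2*(1+x^2))^Suc (Suc 0) + inverse (1+x^2) / 2 = 1/((1+x^2)*(1+x^2))"
      using onepx2[of x] by (intro gen) simp_all
    show ?thesis by (rule DERIV_cong[OF dF eqF])
  qed
  have C: "isCont (\<lambda>x::real. 1/((1+x^2)*(1+x^2))) x" for x
    using onepx2[of x] by (intro continuous_intros) (auto simp: add.commute)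
  have l1: "((\<lambda>x::real. x/(2*(1+x^2))) \<longlongrightarrow> 0) at_bot" by real_asymp
  have l2: "((\<lambda>x::real. x/(2*(1+x^2))) \<longlongrightarrow> 0) at_top" by real_asymp
  have A: "((F \<circ> real_of_ereal) \<longlongrightarrow> -pi/4) (at_right (-\<infinity>))"
    unfolding ereal_tendsto_simps1 F_def
    using tendsto_add[OF l1 tendsto_divide[OF tendsto_arctan_at_bot tendsto_const[of 2]]] by simp
  have B: "((F \<circ> real_of_ereal) \<longlongrightarrow> pi/4) (at_left \<infinity>)"
    unfolding ereal_tendsto_simps1 F_def
    using tendsto_add[OF l2 tendsto_divide[OF tendsto_arctan_at_top tendsto_const[of 2]]] by simp
  have lt: "(-\<infinity>::ereal) < \<infinity>" by simp
  have ae: "AE x in lborel. -\<infinity> < ereal x \<longrightarrow> ereal x < \<infinity> \<longrightarrow> 0 \<le> 1/((1+x^2)*(1+x^2::real))"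
    by (simp add: add_pos_nonneg)
  note * = interval_integral_FTC_nonneg[OF lt D C ae A B]
  show ?thesis unfolding *(2) by simp
qed


lemma special_B:
  assumes int: "set_integrable lborel (einterval (-\<infinity>) \<infinity>) (\<lambda>x::real. (-x)/((1+x^2)*(1+x^2)))"
  shows "(LBINT x=-\<infinity>..\<infinity>. (-x)/((1+x^2)*(1+x^2))) = 0"
proof -
  define F where "F = (\<lambda>x::real. 1/(2*(1+x^2)))"
  have D: "(F has_vector_derivative ((-x)/((1+x^2)*(1+x^2)))) (at x)" for x
  proof -
    have dF: "DERIV F x :> (- (2*(2*x^1*1)) / (2*(1+x^2))^2)"
      unfolding F_def using onepx2[of x]
      by (intro derivative_eq_intros refl) (auto simp: divide_inverse power2_eq_square)
    have gen: "\<And>E::real. E \<noteq> 0 \<Longrightarrow> (- (2*(2*x^1*1)) / (2*E)^2) = (-x)/(E*E)"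
      by (simp add: field_simps power2_eq_square)
    have eqF: "(- (2*(2*x^1*1)) / (2*(1+x^2))^2) = (-x)/((1+x^2)*(1+x^2))"
      using onepx2[of x] by (intro gen) simp
    show ?thesis unfolding has_real_derivative_iff_has_vector_derivative[symmetric] by (rule DERIV_cong[OF dF eqF])
  qed
  have C: "isCont (\<lambda>x::real. (-x)/((1+x^2)*(1+x^2))) x" for x
    using onepx2[of x] by (intro continuous_intros) (auto simp: add.commute)
  have A: "((F \<circ> real_of_ereal) \<longlongrightarrow> 0) (at_right (-\<infinity>))"
    unfolding ereal_tendsto_simps1 F_def by real_asymp
  have B: "((F \<circ> real_of_ereal) \<longlongrightarrow> 0) (at_left \<infinity>)"
    unfolding ereal_tendsto_simps1 F_def by real_asymp
  have lt: "(-\<infinity>::ereal) < \<infinity>" by simp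
  note * = interval_integral_FTC_integrable[OF lt D C int A B]
  show ?thesis unfolding * by simp
qed

lemma pf0:
  fixes E D K P Q :: real
  assumes "E \<noteq> 0" "D \<noteq> 0" "K \<noteq> 0"
  shows "(P/K)/E + (Q/K)/D = (P*D + Q*E)/(K*(E*D))"
  using assms by (simp add: field_simps)

lemma pf:
  fixes E D K x u al be ga N :: real
  assumes "E \<noteq> 0" "D \<noteq> 0" "K \<noteq> 0" "(al*x+be)*D + (ga - al*(x-u))*E = N"
  shows "N/(K*(E*D)) = ((al/K)*x + be/K)/E + (ga/K - (al/K)*(x-u))/D"
proof -
  have 1: "(al/K)*x + be/K = (al*x+be)/K" by (simp add: add_divide_distrib)
  have 2: "ga/K - (al/K)*(x-u) = (ga - al*(x-u))/K" by (simp add: diff_divide_distrib)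
  show ?thesis unfolding 1 2 pf0[OF assms(1-3)] assms(4) ..
qed



lemma IA:
  fixes u v :: real assumes v: "v > 0"
  shows "(\<integral>x. 1/((u-x)^2+v^2) \<partial>cauchy_measure) = (1+v)/(v * (u^2+(1+v)^2))"
proof -
  define p where "p = (\<lambda>x::real. 1/((1+x^2)*((x-u)^2+v^2)))"
  have Dp: "\<And>x. (x-u)^2+v^2 > 0" using v by (simp add: add_nonneg_pos)
  have "(\<integral>x. 1/((u-x)^2+v^2) \<partial>cauchy_measure) = (\<integral>x. (1/(pi*(1+x^2))) *\<^sub>R (1/((u-x)^2+v^2)) \<partial>lborel)"
    unfolding cauchy_measure_def by (rule integral_density) (auto simp: add_pos_nonneg)
  also have "\<dots> = (\<integral>x. (1/pi) * p x \<partial>lborel)"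
    by (rule Bochner_Integration.integral_cong) (auto simp: p_def power2_commute[of u])
  also have "\<dots> = (1/pi) * (LBINT x=-\<infinity>..\<infinity>. p x)" by (simp add: LBINT_UNIV)
  also have "(LBINT x=-\<infinity>..\<infinity>. p x) = pi*(1+v)/(v * (u^2+(1+v)^2))"
  proof (cases "u = 0 \<and> v = 1")
    case True
    then have "p = (\<lambda>x. 1/((1+x^2)*(1+x^2)))" by (auto simp: p_def add.commute)
    then show ?thesis using True special_A by simp
  next
    case False
    define K where "K = (u^2+(v-1)^2)*(u^2+(v+1)^2)"
    have "u^2+(v-1)^2 > 0" using False by (auto simp: add_pos_nonneg add_nonneg_pos)
    moreover have "u^2+(v+1)^2 > 0" using v by (simp add: add_nonneg_pos)
    ultimately have "K > 0" unfolding K_def by (rule mult_pos_pos)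
    then have K: "K \<noteq> 0" by simp
    have poly: "(2*u*x + (u^2+v^2-1))*((x-u)^2+v^2) + ((u^2-v^2+1) - 2*u*(x-u))*(1+x^2) = K" for x
      unfolding K_def by (simp add: power2_eq_square algebra_simps)
    have pe: "p x = (2*u/K*x + (u^2+v^2-1)/K)/(1+x^2) + ((u^2-v^2+1)/K - 2*u/K*(x-u))/((x-u)^2+v^2)" for x
    proof -
      have "p x = K/(K*((1+x^2)*((x-u)^2+v^2)))" using K by (simp add: p_def)
      also have "\<dots> = (2*u/K*x + (u^2+v^2-1)/K)/(1+x^2) + ((u^2-v^2+1)/K - 2*u/K*(x-u))/((x-u)^2+v^2)"
        by (rule pf) (use onepx2[of x] Dp[of x] K poly in auto)
      finally show ?thesis .
    qed
    have nn: "p x \<ge> 0" for x using Dp[of x] onepx2[of x] by (simp add: p_def)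
    have "(LBINT x=-\<infinity>..\<infinity>. p x) = pi*((u^2+v^2-1)/K + ((u^2-v^2+1)/K)/v)"
      by (rule LBINT_form_nonneg(2)[OF v pe nn])
    also have "\<dots> = pi*(1+v)/(v * (u^2+(1+v)^2))"
    proof -
      have gen: "\<And>A B P Q. A > 0 \<Longrightarrow> B > 0 \<Longrightarrow> P * v + Q = (1+v)*A \<Longrightarrow>
          pi*(P/(A*B) + (Q/(A*B))/v) = pi*(1+v)/(v * B)"
      proof -
        fix A B P Q :: real assume a: "A > 0" "B > 0" "P * v + Q = (1+v)*A"
        have "pi*(P/(A*B) + (Q/(A*B))/v) = pi*(P * v + Q)/(A*B * v)" using a v by (simp add: field_simps)
        also have "\<dots> = pi*(1+v)/(v * B)" using a v by (simp add: a(3) field_simps)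
        finally show "pi*(P/(A*B) + (Q/(A*B))/v) = pi*(1+v)/(v * B)" .
      qed
      have f: "(u^2+v^2-1) * v + (u^2-v^2+1) = (1+v)*(u^2+(v-1)^2)"
        by (simp add: power2_eq_square algebra_simps)
      show ?thesis unfolding K_def
        using gen[OF \<open>u^2+(v-1)^2 > 0\<close> _ f] \<open>u^2+(v+1)^2 > 0\<close> by (simp add: add.commute[of v 1])
    qed
    finally show ?thesis .
  qed
  finally show ?thesis by simp
qed


lemma Cdiff: "Complex u v - complex_of_real x = Complex (u-x) v"
  by (simp add: complex_eq_iff)

lemma Re_inv_C: "Re (1 / Complex a b) = a/(a^2+b^2)"
  by (simp add: Re_divide complex_norm power2_eq_square)

lemma norm_inv_C: assumes "b > 0" shows "norm (1 / Complex a b) \<le> 1/b"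
proof -
  have "b \<le> cmod (Complex a b)" using abs_Im_le_cmod[of "Complex a b"] assms by simp
  then show ?thesis using assms by (simp add: norm_divide divide_simps)
qed

lemma IB:
  fixes u v :: real assumes v: "v > 0"
  shows "Re (\<integral>x. 1/(Complex u v - complex_of_real x) \<partial>cauchy_measure) = u/(u^2+(1+v)^2)"
proof -
  define f where "f = (\<lambda>x::real. 1/(Complex u v - complex_of_real x))"
  define q where "q = (\<lambda>x::real. (u-x)/((1+x^2)*((x-u)^2+v^2)))"
  have Dp: "\<And>x. (x-u)^2+v^2 > 0" using v by (simp add: add_nonneg_pos)
  have fb: "norm (f x) \<le> 1/v" for x unfolding f_def Cdiff by (rule norm_inv_C[OF v])
  have fm[measurable]: "f \<in> borel_measurable lborel" unfolding f_def by measurable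
  have ii: "integrable lborel (\<lambda>x::real. inverse (1+x^2))"
    using integrable_inverse_1_plus_square by (simp add: set_integrable_def)
  have "integrable lborel (\<lambda>x. (1/(pi*(1+x^2))) *\<^sub>R f x)"
  proof (rule Bochner_Integration.integrable_bound[where f="\<lambda>x. (1/(pi * v)) * inverse (1+x^2)"])
    show "integrable lborel (\<lambda>x. (1/(pi * v)) * inverse (1+x^2))" using ii by simp
    show "(\<lambda>x. (1/(pi*(1+x^2))) *\<^sub>R f x) \<in> borel_measurable lborel" by measurable
    show "AE x in lborel. norm ((1/(pi*(1+x^2))) *\<^sub>R f x) \<le> norm ((1/(pi * v)) * inverse (1+x^2))"
    proof (intro AE_I2)
      fix x :: real
      have "norm ((1/(pi*(1+x^2))) *\<^sub>R f x) = (1/(pi*(1+x^2))) * norm (f x)"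
        using onepx2[of x] by simp
      also have "\<dots> \<le> (1/(pi*(1+x^2))) * (1/v)"
        using fb[of x] onepx2[of x] by (intro mult_left_mono) auto
      also have "\<dots> = norm ((1/(pi * v)) * inverse (1+x^2))"
        using onepx2[of x] v by (simp add: field_simps abs_mult)
      finally show "norm ((1/(pi*(1+x^2))) *\<^sub>R f x) \<le> norm ((1/(pi * v)) * inverse (1+x^2))" .
    qed
  qed
  then have fint: "integrable cauchy_measure f"
    unfolding cauchy_measure_def by (subst integrable_density) (auto simp: add_pos_nonneg)
  have ReF: "Re (f x) = (u-x)/((u-x)^2+v^2)" for x unfolding f_def Cdiff Re_inv_C ..
  have "Re (\<integral>x. f x \<partial>cauchy_measure) = (\<integral>x. Re (f x) \<partial>cauchy_measure)"
    using fint by simp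
  also have "\<dots> = (\<integral>x. (1/(pi*(1+x^2))) *\<^sub>R Re (f x) \<partial>lborel)"
    unfolding cauchy_measure_def by (rule integral_density) (auto simp: add_pos_nonneg)
  also have "\<dots> = (\<integral>x. (1/pi) * q x \<partial>lborel)"
    by (rule Bochner_Integration.integral_cong) (auto simp: q_def ReF power2_commute[of u])
  also have "\<dots> = (1/pi) * (LBINT x=-\<infinity>..\<infinity>. q x)" by (simp add: LBINT_UNIV)
  also have "(LBINT x=-\<infinity>..\<infinity>. q x) = pi*u/(u^2+(1+v)^2)"
  proof -
    have qint: "set_integrable lborel (einterval (-\<infinity>) \<infinity>) q"
      unfolding set_int_UNIV
    proof (rule Bochner_Integration.integrable_bound[where f="\<lambda>x. (1/v) * inverse (1+x^2)"])
      show "integrable lborel (\<lambda>x. (1/v) * inverse (1+x^2))" using ii by simp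
      show "q \<in> borel_measurable lborel" unfolding q_def by measurable
      show "AE x in lborel. norm (q x) \<le> norm ((1/v) * inverse (1+x^2))"
      proof (intro AE_I2)
        fix x :: real
        have "q x = inverse (1+x^2) * Re (f x)" unfolding q_def ReF
          by (simp add: power2_commute[of u] field_simps)
        then have "norm (q x) = inverse (1+x^2) * norm (Re (f x))"
          using onepx2[of x] by (simp add: abs_mult)
        also have "\<dots> \<le> inverse (1+x^2) * (1/v)"
          using fb[of x] abs_Re_le_cmod[of "f x"] onepx2[of x] by (intro mult_left_mono) auto
        also have "\<dots> = norm ((1/v) * inverse (1+x^2))"
          using onepx2[of x] v by (simp add: field_simps abs_mult)
        finally show "norm (q x) \<le> norm ((1/v) * inverse (1+x^2))" .
      qed
    qed
    show ?thesis
    proof (cases "u = 0 \<and> v = 1")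
      case True
      then have "q = (\<lambda>x. (-x)/((1+x^2)*(1+x^2)))" by (auto simp: q_def add.commute)
      then show ?thesis using True special_B qint by simp
    next
      case False
      define K where "K = (u^2+(v-1)^2)*(u^2+(v+1)^2)"
      have A: "u^2+(v-1)^2 > 0" using False by (auto simp: add_pos_nonneg add_nonneg_pos)
      moreover have B: "u^2+(v+1)^2 > 0" using v by (simp add: add_nonneg_pos)
      ultimately have "K > 0" unfolding K_def by (rule mult_pos_pos)
      then have K: "K \<noteq> 0" by simp
      have poly: "((u^2-v^2+1)*x + u*(u^2+v^2+1))*((x-u)^2+v^2) + ((-2*u* v^2) - (u^2-v^2+1)*(x-u))*(1+x^2) = K*(u-x)" for x
        unfolding K_def by (simp add: power2_eq_square algebra_simps)
      have pe: "q x = ((u^2-v^2+1)/K*x + (u*(u^2+v^2+1))/K)/(1+x^2) + ((-2*u* v^2)/K - (u^2-v^2+1)/K*(x-u))/((x-u)^2+v^2)" for x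
      proof -
        have "q x = (K*(u-x))/(K*((1+x^2)*((x-u)^2+v^2)))" using K by (simp add: q_def)
        also have "\<dots> = ((u^2-v^2+1)/K*x + (u*(u^2+v^2+1))/K)/(1+x^2) + ((-2*u* v^2)/K - (u^2-v^2+1)/K*(x-u))/((x-u)^2+v^2)"
          by (rule pf) (use onepx2[of x] Dp[of x] K poly in auto)
        finally show ?thesis .
      qed
      have "(LBINT x=-\<infinity>..\<infinity>. q x) = pi*((u*(u^2+v^2+1))/K + ((-2*u* v^2)/K)/v)"
        by (rule LBINT_form_int[OF v pe qint])
      also have "\<dots> = pi*u/(u^2+(1+v)^2)"
      proof -
        have gen: "\<And>A B P Q. A > 0 \<Longrightarrow> B > 0 \<Longrightarrow> P * v + Q = (u * v)*A \<Longrightarrow>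
            pi*(P/(A*B) + (Q/(A*B))/v) = pi*u/B"
        proof -
          fix A B P Q :: real assume a: "A > 0" "B > 0" "P * v + Q = (u * v)*A"
          have "pi*(P/(A*B) + (Q/(A*B))/v) = pi*(P * v + Q)/(A*B * v)" using a v by (simp add: field_simps)
          also have "\<dots> = pi*u/B" using a v by (simp add: a(3) field_simps)
          finally show "pi*(P/(A*B) + (Q/(A*B))/v) = pi*u/B" .
        qed
        have f: "(u*(u^2+v^2+1)) * v + (-2*u* v^2) = (u * v)*(u^2+(v-1)^2)"
          by (simp add: power2_eq_square algebra_simps)
        show ?thesis unfolding K_def
          using gen[OF A B f] by (simp add: add.commute[of v 1])
      qed
      finally show ?thesis .
    qed
  qed
  finally show ?thesis unfolding f_def by simp
qed



lemma m_mono: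
  fixes x v v' :: real assumes "0 < v" "v < v'"
  shows "v *x^2/(1+v) + v *(1+v) < v'*x^2/(1+v') + v'*(1+v')"
proof -
  have "v/(1+v) \<le> v'/(1+v')" using assms by (simp add: divide_simps algebra_simps)
  then have "x^2 * (v/(1+v)) \<le> x^2 * (v'/(1+v'))" by (intro mult_left_mono) auto
  moreover have "v *(1+v) < v'*(1+v')" using assms by (intro mult_strict_mono) auto
  ultimately show ?thesis by (simp add: mult.commute)
qed

lemma cond_iff:
  fixes t x v :: real assumes t: "t > 0" and v: "v > 0"
  shows "(\<integral>y. 1/((x-y)^2+v^2) \<partial>cauchy_measure) \<le> 1/t \<longleftrightarrow> t \<le> v *x^2/(1+v) + v *(1+v)"
proof -
  have D: "x^2+(1+v)^2 > 0" using v by (simp add: add_nonneg_pos)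
  have "(\<integral>y. 1/((x-y)^2+v^2) \<partial>cauchy_measure) \<le> 1/t \<longleftrightarrow> (1+v)/(v * (x^2+(1+v)^2)) \<le> 1/t"
    by (simp add: IA[OF v])
  also have "\<dots> \<longleftrightarrow> t*(1+v) \<le> v * (x^2+(1+v)^2)"
    using t v D by (simp add: divide_simps mult.commute)
  also have "\<dots> \<longleftrightarrow> t \<le> v * (x^2+(1+v)^2)/(1+v)"
    using v by (simp add: divide_simps mult.commute)
  also have "v * (x^2+(1+v)^2)/(1+v) = v *x^2/(1+v) + v *(1+v)"
    using v by (simp add: field_simps power2_eq_square)
  finally show ?thesis .
qed

lemma vt_char:
  fixes t x w :: real assumes t: "t > 0" and w: "w > 0" and eq: "w * (x^2+(1+w)^2) = t*(1+w)"
  shows "v_t cauchy_measure t x = w"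
proof -
  have mw: "w*x^2/(1+w) + w*(1+w) = t"
  proof -
    have "w*x^2/(1+w) + w*(1+w) = w * (x^2+(1+w)^2)/(1+w)"
      using w by (simp add: field_simps power2_eq_square)
    also have "\<dots> = t" using eq w by simp
    finally show ?thesis .
  qed
  have "{v. v > 0 \<and> (\<integral>y. 1/((x-y)^2+v^2) \<partial>cauchy_measure) \<le> 1/t} = {w..}"
  proof (intro set_eqI iffI)
    fix v assume "v \<in> {v. v > 0 \<and> (\<integral>y. 1/((x-y)^2+v^2) \<partial>cauchy_measure) \<le> 1/t}"
    then have v: "v > 0" and c: "t \<le> v *x^2/(1+v) + v *(1+v)" using cond_iff[OF t] by auto
    show "v \<in> {w..}"
    proof (rule ccontr)
      assume "v \<notin> {w..}"
      then have "v < w" by simp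
      from m_mono[OF v this, of x] c mw show False by simp
    qed
  next
    fix v assume "v \<in> {w..}"
    then have vw: "w \<le> v" by simp
    then have v: "v > 0" using w by simp
    have "t \<le> v *x^2/(1+v) + v *(1+v)"
    proof (cases "v = w")
      case True then show ?thesis using mw by simp
    next
      case False then show ?thesis using m_mono[OF w, of v x] vw mw by simp
    qed
    then show "v \<in> {v. v > 0 \<and> (\<integral>y. 1/((x-y)^2+v^2) \<partial>cauchy_measure) \<le> 1/t}"
      using cond_iff[OF t v] v by simp
  qed
  then show ?thesis unfolding v_t_def by simp
qed

lemma vt_exists:
  fixes t x :: real assumes t: "t > 0"
  shows "\<exists>w>0. w * (x^2+(1+w)^2) = t*(1+w)"
proof -
  define P where "P = (\<lambda>w::real. w * (x^2+(1+w)^2) - t*(1+w))"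
  have P0: "P 0 \<le> 0" using t by (simp add: P_def)
  have "(t+1)*(t+2)^2 \<le> (t+1) * (x^2+(t+2)^2)" using t by (intro mult_left_mono) auto
  moreover have "t*(t+2) \<le> (t+1)*(t+2)^2" using t by (simp add: power2_eq_square algebra_simps)
  ultimately have P1: "0 \<le> P (t+1)" by (simp add: P_def algebra_simps)
  have "continuous_on {0..t+1} P" unfolding P_def by (intro continuous_intros)
  from IVT'[of P 0 0 "t+1", OF P0 P1 _ this] t obtain w where w: "0 \<le> w" "P w = 0" by auto
  have "w \<noteq> 0" using w t by (auto simp: P_def)
  with w have "w > 0" "w * (x^2+(1+w)^2) = t*(1+w)" by (auto simp: P_def)
  then show ?thesis by blast
qed

lemma vt_props:
  fixes t x :: real assumes t: "t > 0"
  shows "v_t cauchy_measure t x > 0"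
    "v_t cauchy_measure t x * (x^2+(1+v_t cauchy_measure t x)^2) = t*(1+v_t cauchy_measure t x)"
  using vt_exists[OF t, of x] vt_char[OF t] by auto

lemma ft_eq:
  fixes t x :: real assumes t: "t > 0"
  shows "f_t cauchy_measure t x = x/(1+v_t cauchy_measure t x)"
proof -
  define w where "w = v_t cauchy_measure t x"
  have w: "w > 0" and eq: "w * (x^2+(1+w)^2) = t*(1+w)" using vt_props[OF t, of x] by (auto simp: w_def)
  have D: "x^2+(1+w)^2 > 0" using w by (simp add: add_nonneg_pos)
  have "f_t cauchy_measure t x = x - t * (x/(x^2+(1+w)^2))"
    unfolding f_t_def H_minus_def w_def[symmetric] using IB[OF w, of x] by simp
  also have "\<dots> = x/(1+w)"
  proof -
    have tt: "t = w * (x^2+(1+w)^2)/(1+w)" using eq w by (simp add: field_simps)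
    have gen: "\<And>Dd. Dd > 0 \<Longrightarrow> x - (w * Dd/(1+w)) * (x/Dd) = x/(1+w)"
      using w by (simp add: field_simps)
    show ?thesis unfolding tt using gen[OF D] .
  qed
  finally show ?thesis by (simp add: w_def)
qed



theorem lemma6p10:
  fixes t u :: real
  assumes "t > 0"
  shows "phi_t cauchy_measure t u =
    4 * t / (sqrt (u\<^sup>2 + 1) * (sqrt (u\<^sup>2 + 1) + sqrt (u\<^sup>2 + 1 + 4 * t)))"
proof -
  have t: "t > 0" by (rule assms)
  define s where "s = u^2 + 1"
  define r where "r = sqrt s"
  define q where "q = sqrt (s + 4 * t)"
  have s: "s > 0" unfolding s_def by (simp add: add_nonneg_pos)
  have r: "r > 0" unfolding r_def using s by simp
  have rr: "r^2 = s" unfolding r_def using s by simp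
  have qq: "q^2 = s + 4 * t" unfolding q_def using s t by simp
  have rq: "r < q" unfolding r_def q_def using t by (simp add: real_sqrt_less_iff)
  have q0: "q > 0" using r rq by simp
  define w0 where "w0 = (q - r)/(2 * r)"
  have w0: "w0 > 0" unfolding w0_def using r rq by simp
  have w0eq: "w0 *(1+w0)* s = t"
  proof -
    have "w0 *(1+w0)* s = ((q-r)/(2 * r))*((q+r)/(2 * r))* r^2"
      unfolding w0_def rr[symmetric] using r by (simp add: field_simps)
    also have "\<dots> = (q^2 - r^2)/4" using r by (simp add: field_simps power2_eq_square)
    also have "\<dots> = t" using qq rr by simp
    finally show ?thesis .
  qed
  define x0 where "x0 = u *(1+w0)"
  have "w0 * (x0^2+(1+w0)^2) = (w0 *(1+w0)* s)*(1+w0)"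
    unfolding x0_def s_def by (simp add: power2_eq_square algebra_simps)
  then have "w0 * (x0^2+(1+w0)^2) = t *(1+w0)" using w0eq by simp
  then have vx0: "v_t cauchy_measure t x0 = w0" by (rule vt_char[OF t w0])
  have "f_t cauchy_measure t x0 = x0/(1+w0)" by (simp only: ft_eq[OF t] vx0)
  also have "x0/(1+w0) = u" unfolding x0_def using w0 by simp
  finally have "f_t cauchy_measure t x0 = u" .
  then have "u \<in> range (f_t cauchy_measure t)" by (metis rangeI)
  then have fy: "f_t cauchy_measure t (inv (f_t cauchy_measure t) u) = u" by (rule f_inv_into_f)
  define y where "y = inv (f_t cauchy_measure t) u"
  define w where "w = v_t cauchy_measure t y"
  have w: "w > 0" and weq: "w * (y^2+(1+w)^2) = t *(1+w)" using vt_props[OF t, of y] by (auto simp: w_def)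
  have "u = y/(1+w)" using fy ft_eq[OF t, of y] by (simp add: y_def w_def)
  then have yu: "y = u *(1+w)" using w by (simp add: field_simps)
  have "(w *(1+w)* s)*(1+w) = t *(1+w)"
    using weq unfolding yu s_def by (simp add: power2_eq_square algebra_simps)
  then have wt: "w *(1+w)* s = t" using w by simp
  have "(2 * r * w + r)^2 = q^2"
  proof -
    have "(2 * r * w + r)^2 = 4 *(w *(1+w)* r^2) + r^2" by (simp add: power2_eq_square algebra_simps)
    also have "\<dots> = 4 * t + s" using wt rr by simp
    finally show ?thesis using qq by simp
  qed
  moreover have "0 \<le> 2 * r * w + r" using r w by (simp add: add_nonneg_nonneg)
  ultimately have "2 * r * w + r = q" using q0 power2_eq_imp_eq[of "2 * r * w + r" q] by simp
  then have "2 * w = (q - r)/r" using r by (simp add: field_simps)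
  also have "\<dots> = 4 * t/(r *(r+q))"
  proof -
    have h: "4 * t = (q-r)*(q+r)" using qq rr by (simp add: power2_eq_square algebra_simps)
    have "4 * t/(r *(r+q)) = ((q-r)*(q+r))/(r *(q+r))" using h by (simp add: add.commute)
    also have "\<dots> = (q-r)/r" using r q0 by (intro mult_divide_mult_cancel_right) simp
    finally show ?thesis by simp
  qed
  finally have "2 * w = 4 * t/(r *(r+q))" .
  then show ?thesis unfolding phi_t_def
    by (simp add: w_def y_def r_def q_def s_def)
qed


end
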